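(* Let $(X_j)_{j\in\mathbb{Z}^2}$ be i.i.d. Poisson random variables with mean $\lambda>0$ and let $N_n$ be the greedy lattice animal weight of size $n$. Then for every $k\in\mathbb{N}$ there is $C<\infty$ (depending on $k,\lambda$) such that $\mathbb{E}N_n^k\le Cn^k$ for all $n\in\mathbb{N}$.
   Context: A lattice animal is a connected subset of $\mathbb{Z}^2$ containing the origin; $A(n)$ is the set of lattice animals with $n$ sites; $N_n=\max_{\mathcal{A}\in A(n)}\sum_{k\in\mathcal{A}}X_k$. *)

theory Defs
  imports "HOL-Probability.Probability"
begin

definition lattice_adj :: "int \<times> int \<Rightarrow> int \<times> int \<Rightarrow> bool" where
  "lattice_adj a b \<longleftrightarrow> \<bar>fst a - fst b\<bar> + \<bar>snd a - snd b\<bar> = 1"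

definition lattice_connected :: "(int \<times> int) set \<Rightarrow> bool" where
  "lattice_connected A \<longleftrightarrow>
     (\<forall>x\<in>A. \<forall>y\<in>A. (x, y) \<in> {(a, b). a \<in> A \<and> b \<in> A \<and> lattice_adj a b}\<^sup>*)"

definition lattice_animals :: "nat \<Rightarrow> (int \<times> int) set set" where
  "lattice_animals n = {A. finite A \<and> card A = n \<and> (0, 0) \<in> A \<and> lattice_connected A}"

definition greedy_animal :: "(int \<times> int \<Rightarrow> 'a \<Rightarrow> nat) \<Rightarrow> nat \<Rightarrow> 'a \<Rightarrow> nat" where
  "greedy_animal X n \<omega> = Max ((\<lambda>A. \<Sum>j\<in>A. X j \<omega>) ` lattice_animals n)"

end

theory Submission
  imports Defs
begin
definition Dirs :: "(int \<times> int) set" where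
  "Dirs = {(1,0),(-1,0),(0,1),(0,-1)}"

fun walk :: "int \<times> int \<Rightarrow> (int \<times> int) list \<Rightarrow> (int \<times> int) list" where
  "walk p [] = [p]"
| "walk p (d # ds) = p # walk (fst p + fst d, snd p + snd d) ds"

lemma walk_hd: "p \<in> set (walk p ds)"
  by (cases ds) auto

lemma detour:
  "b \<in> set (walk p ds) \<Longrightarrow> \<exists>ds'. set (walk p ds') = insert a (set (walk p ds))
     \<and> length ds' = Suc (Suc (length ds))
     \<and> set ds' \<subseteq> insert (fst a - fst b, snd a - snd b) (insert (fst b - fst a, snd b - snd a) (set ds))"
proof (induction ds arbitrary: p)
  case Nil
  then have "b = p" by simp
  then show ?case
    by (intro exI[of _ "[(fst a - fst b, snd a - snd b), (fst b - fst a, snd b - snd a)]"]) auto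
next
  case (Cons d ds)
  show ?case
  proof (cases "b = p")
    case True
    have "set (walk p ((fst a - fst b, snd a - snd b) # (fst b - fst a, snd b - snd a) # d # ds))
        = insert a (set (walk p (d # ds)))" using True by auto
    then show ?thesis using True
      by (intro exI[of _ "(fst a - fst b, snd a - snd b) # (fst b - fst a, snd b - snd a) # d # ds"]) auto
  next
    case False
    then have "b \<in> set (walk (fst p + fst d, snd p + snd d) ds)" using Cons.prems by auto
    from Cons.IH[OF this] obtain ds' where ds':
      "set (walk (fst p + fst d, snd p + snd d) ds') = insert a (set (walk (fst p + fst d, snd p + snd d) ds))"
      "length ds' = Suc (Suc (length ds))"
      "set ds' \<subseteq> insert (fst a - fst b, snd a - snd b) (insert (fst b - fst a, snd b - snd a) (set ds))"
      by blast
    show ?thesis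
      by (intro exI[of _ "d # ds'"]) (use ds' in auto)
  qed
qed

lemma adj_dirs: "lattice_adj u v \<Longrightarrow> (fst v - fst u, snd v - snd u) \<in> Dirs"
  unfolding lattice_adj_def Dirs_def by (cases u; cases v) (auto simp: abs_if split: if_splits)

lemma rtrancl_exit:
  assumes "(x, y) \<in> R\<^sup>*" "x \<in> B" "y \<notin> B"
  shows "\<exists>u v. (u, v) \<in> R \<and> u \<in> B \<and> v \<notin> B"
  using assms by (induction rule: rtrancl_induct) auto

lemma animal_walk_aux:
  assumes A: "finite A" "(0,0) \<in> A" "lattice_connected A"
  shows "k < card A \<Longrightarrow> \<exists>ds. length ds = 2 * k \<and> set ds \<subseteq> Dirs \<and> set (walk (0,0) ds) \<subseteq> A
            \<and> card (set (walk (0,0) ds)) = Suc k"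
proof (induction k)
  case 0
  then show ?case using A by (intro exI[of _ "[]"]) auto
next
  case (Suc k)
  then obtain ds where ds: "length ds = 2 * k" "set ds \<subseteq> Dirs" "set (walk (0,0) ds) \<subseteq> A"
      "card (set (walk (0,0) ds)) = Suc k" by auto
  let ?B = "set (walk (0,0) ds)"
  have "?B \<noteq> A" using ds(4) Suc.prems by auto
  then obtain c where c: "c \<in> A" "c \<notin> ?B" using ds(3) by blast
  have "((0,0), c) \<in> {(a, b). a \<in> A \<and> b \<in> A \<and> lattice_adj a b}\<^sup>*"
    using A c unfolding lattice_connected_def by blast
  from rtrancl_exit[OF this walk_hd c(2)] obtain u v where uv:
    "u \<in> A" "v \<in> A" "lattice_adj u v" "u \<in> ?B" "v \<notin> ?B" by auto
  from detour[OF uv(4), of v] obtain ds' where ds':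
    "set (walk (0,0) ds') = insert v ?B" "length ds' = Suc (Suc (length ds))"
    "set ds' \<subseteq> insert (fst v - fst u, snd v - snd u) (insert (fst u - fst v, snd u - snd v) (set ds))"
    by blast
  have "lattice_adj v u" using uv(3) unfolding lattice_adj_def by (simp add: abs_minus_commute add.commute)
  then have "set ds' \<subseteq> Dirs" using ds'(3) ds(2) adj_dirs[OF uv(3)] adj_dirs[of v u] by auto
  moreover have "card (set (walk (0,0) ds')) = Suc (Suc k)"
    using ds'(1) uv(5) ds(4) by simp
  ultimately show ?case using ds'(1,2) ds(1,3) uv(2) by (intro exI[of _ ds']) auto
qed

lemma animals_subset:
  assumes "n \<ge> 1"
  shows "lattice_animals n \<subseteq> (\<lambda>ds. set (walk (0,0) ds)) ` {ds. set ds \<subseteq> Dirs \<and> length ds = 2 * (n - 1)}"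
proof
  fix A assume "A \<in> lattice_animals n"
  then have A: "finite A" "card A = n" "(0,0) \<in> A" "lattice_connected A"
    unfolding lattice_animals_def by auto
  from animal_walk_aux[OF A(1,3,4), of "n - 1"] assms A(2) obtain ds where
    ds: "length ds = 2 * (n - 1)" "set ds \<subseteq> Dirs" "set (walk (0,0) ds) \<subseteq> A"
      "card (set (walk (0,0) ds)) = n" by auto
  have "set (walk (0,0) ds) = A" using card_subset_eq[OF A(1) ds(3)] ds(4) A(2) by simp
  then show "A \<in> (\<lambda>ds. set (walk (0,0) ds)) ` {ds. set ds \<subseteq> Dirs \<and> length ds = 2 * (n - 1)}"
    using ds by auto
qed

lemma animals_finite_card:
  assumes "n \<ge> 1"
  shows "finite (lattice_animals n) \<and> card (lattice_animals n) \<le> 16 ^ n"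
proof -
  have fD: "finite Dirs" "card Dirs = 4" unfolding Dirs_def by auto
  let ?L = "{ds. set ds \<subseteq> Dirs \<and> length ds = 2 * (n - 1)}"
  have fL: "finite ?L" using finite_lists_length_eq[OF fD(1)] by simp
  have cL: "card ?L = 4 ^ (2 * (n - 1))" using card_lists_length_eq[of Dirs] fD by simp
  have "card (lattice_animals n) \<le> card ((\<lambda>ds. set (walk (0,0) ds)) ` ?L)"
    by (rule card_mono[OF finite_imageI[OF fL] animals_subset[OF assms]])
  also have "\<dots> \<le> card ?L" by (rule card_image_le[OF fL])
  also have "\<dots> \<le> 16 ^ n" unfolding cL
    by (simp add: power_mult)
  finally show ?thesis using finite_subset[OF animals_subset[OF assms] finite_imageI[OF fL]] by simp
qed

lemma poisson_mgf2:
  assumes "lam > 0"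
  shows "(\<integral>\<^sup>+x. ennreal (exp (2 * real x)) \<partial>measure_pmf (poisson_pmf lam)) = ennreal (exp (lam * (exp 2 - 1)))"
proof -
  have eq: "ennreal (pmf (poisson_pmf lam) x) * ennreal (exp (2 * real x))
      = ennreal (exp (-lam) * ((lam * exp 2) ^ x / fact x))" for x
  proof -
    have e: "exp (2 * real x) = exp 2 ^ x"
      by (metis exp_of_nat_mult mult.commute)
    have "ennreal (pmf (poisson_pmf lam) x) * ennreal (exp (2 * real x))
        = ennreal (pmf (poisson_pmf lam) x * exp (2 * real x))"
      by (simp add: ennreal_mult')
    also have "pmf (poisson_pmf lam) x * exp (2 * real x) = exp (-lam) * ((lam * exp 2) ^ x / fact x)"
      using assms by (simp add: e power_mult_distrib)
    finally show ?thesis .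
  qed
  have s: "(\<lambda>n. exp (-lam) * ((lam * exp 2) ^ n / fact n)) sums (exp (-lam) * exp (lam * exp 2))"
    using sums_mult[OF exp_converges[of "lam * exp 2"], of "exp (-lam)"]
    by (simp add: divide_inverse mult.commute)
  have "(\<integral>\<^sup>+x. ennreal (exp (2 * real x)) \<partial>measure_pmf (poisson_pmf lam))
      = (\<Sum>x. ennreal (exp (-lam) * ((lam * exp 2) ^ x / fact x)))"
    by (simp add: nn_integral_measure_pmf nn_integral_count_space_nat eq)
  also have "\<dots> = ennreal (exp (-lam) * exp (lam * exp 2))"
    using s assms by (subst suminf_ennreal2) (auto simp: sums_iff)
  also have "exp (-lam) * exp (lam * exp 2) = exp (lam * (exp 2 - 1))"
    by (simp add: exp_diff exp_minus field_simps algebra_simps)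
  finally show ?thesis .
qed

lemma pow_le_fact_exp:
  fixes x :: real assumes "x \<ge> 0"
  shows "x ^ k \<le> fact k * exp x"
proof -
  have sm: "summable (\<lambda>n. x ^ n / fact n)"
    using exp_converges[of x] by (simp add: sums_iff divide_inverse mult.commute)
  have "x ^ k / fact k \<le> (\<Sum>n\<in>{k}. x ^ n / fact n)" by simp
  also have "\<dots> \<le> (\<Sum>n. x ^ n / fact n)"
    by (rule sum_le_suminf[OF sm]) (use assms in auto)
  also have "\<dots> = exp x"
    using exp_converges[of x] by (simp add: sums_iff divide_inverse mult.commute)
  finally show ?thesis by (simp add: divide_le_eq mult.commute)
qed

lemma pointwise_real:
  fixes N t :: real assumes "N \<ge> 0" "t \<ge> 0"
  shows "N ^ k \<le> t ^ k + fact k * exp (- t) * exp (2 * N)"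
proof (cases "N \<le> t")
  case True
  then have "N ^ k \<le> t ^ k" using assms by (intro power_mono) auto
  moreover have "0 \<le> fact k * exp (- t) * exp (2 * N)" by simp
  ultimately show ?thesis by linarith
next
  case False
  have "N ^ k \<le> fact k * exp N" by (rule pow_le_fact_exp[OF assms(1)])
  also have "exp N \<le> exp (- t) * exp (2 * N)"
    using False by (simp add: mult_exp_exp)
  finally have "N ^ k \<le> fact k * exp (- t) * exp (2 * N)" by (simp add: mult.assoc)
  then show ?thesis using assms by (smt (verit) zero_le_power)
qed

theorem corollary3p2:
  fixes M :: "'a measure" and X :: "int \<times> int \<Rightarrow> 'a \<Rightarrow> nat" and lam :: real
  assumes "prob_space M"
    and "lam > 0"
    and "\<And>j. X j \<in> measurable M (count_space UNIV)"
    and "prob_space.indep_vars M (\<lambda>_. count_space UNIV) X UNIV"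
    and "\<And>j. distr M (count_space UNIV) (X j) = measure_pmf (poisson_pmf lam)"
  shows "\<forall>k::nat. \<exists>C::real. \<forall>n::nat. n \<ge> 1 \<longrightarrow>
           (\<integral>\<^sup>+ \<omega>. ennreal (real (greedy_animal X n \<omega>) ^ k) \<partial>M) \<le> ennreal (C * real n ^ k)"
proof -
  interpret P: prob_space M by fact
  have Xm[measurable]: "X j \<in> measurable M (count_space UNIV)" for j by (rule assms(3))
  define q where "q = exp (lam * (exp 2 - 1))"
  define T where "T = ln (16 * q)"
  define u where "u = real (Max ({}::nat set))"
  define g where "g A \<omega> = (\<Prod>j\<in>A. ennreal (exp (2 * real (X j \<omega>))))" for A \<omega>
  have q1: "q \<ge> 1" unfolding q_def using assms(2) by simp
  have T0: "T \<ge> 0" unfolding T_def using q1 by simp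
  have expT: "exp T = 16 * q" unfolding T_def using q1 by simp
  have gm[measurable]: "g A \<in> borel_measurable M" for A unfolding g_def by measurable
  have ind: "P.indep_vars (\<lambda>_. borel) (\<lambda>j \<omega>. ennreal (exp (2 * real (X j \<omega>)))) UNIV"
    by (rule P.indep_vars_compose2[OF assms(4)]) simp
  have intj: "(\<integral>\<^sup>+\<omega>. ennreal (exp (2 * real (X j \<omega>))) \<partial>M) = ennreal q" for j
  proof -
    have "(\<integral>\<^sup>+\<omega>. ennreal (exp (2 * real (X j \<omega>))) \<partial>M)
        = (\<integral>\<^sup>+x. ennreal (exp (2 * real x)) \<partial>distr M (count_space UNIV) (X j))"
      by (subst nn_integral_distr) auto
    also have "\<dots> = ennreal q" unfolding assms(5) q_def by (rule poisson_mgf2[OF assms(2)])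
    finally show ?thesis .
  qed
  have intA: "(\<integral>\<^sup>+\<omega>. g A \<omega> \<partial>M) = ennreal q ^ card A" if "finite A" for A
  proof -
    have "(\<integral>\<^sup>+\<omega>. g A \<omega> \<partial>M) = (\<Prod>j\<in>A. \<integral>\<^sup>+\<omega>. ennreal (exp (2 * real (X j \<omega>))) \<partial>M)"
      unfolding g_def
      by (rule P.indep_vars_nn_integral[OF that P.indep_vars_subset[OF ind subset_UNIV]]) simp
    also have "\<dots> = ennreal q ^ card A" by (simp add: intj)
    finally show ?thesis .
  qed
  show ?thesis
  proof (intro allI)
    fix k :: nat
    define C where "C = T ^ k + fact k + u ^ k"
    have C0: "C \<ge> 0" unfolding C_def u_def using T0 by simp
    show "\<exists>C::real. \<forall>n::nat. n \<ge> 1 \<longrightarrow>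
           (\<integral>\<^sup>+ \<omega>. ennreal (real (greedy_animal X n \<omega>) ^ k) \<partial>M) \<le> ennreal (C * real n ^ k)"
    proof (intro exI[of _ C] allI impI)
      fix n :: nat assume n: "n \<ge> 1"
      have nk: "real n ^ k \<ge> 1" using n by simp
      let ?AN = "lattice_animals n"
      have finAN: "finite ?AN" and cardAN: "card ?AN \<le> 16 ^ n" using animals_finite_card[OF n] by auto
      show "(\<integral>\<^sup>+ \<omega>. ennreal (real (greedy_animal X n \<omega>) ^ k) \<partial>M) \<le> ennreal (C * real n ^ k)"
      proof (cases "?AN = {}")
        case True
        have "(\<integral>\<^sup>+ \<omega>. ennreal (real (greedy_animal X n \<omega>) ^ k) \<partial>M) = (\<integral>\<^sup>+ \<omega>. ennreal (u ^ k) \<partial>M)"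
          unfolding greedy_animal_def True u_def by simp
        also have "\<dots> = ennreal (u ^ k)" by (simp add: P.emeasure_space_1)
        also have "\<dots> \<le> ennreal (C * real n ^ k)"
        proof (rule ennreal_leI)
          have "u ^ k \<le> C" unfolding C_def using T0 by simp
          also have "C \<le> C * real n ^ k" using C0 nk by (simp add: mult_le_cancel_left1)
          finally show "u ^ k \<le> C * real n ^ k" .
        qed
        finally show ?thesis .
      next
        case False
        define t where "t = T * real n"
        define c where "c = fact k * exp (- t)"
        have t0: "t \<ge> 0" unfolding t_def using T0 by simp
        have pw: "ennreal (real (greedy_animal X n \<omega>) ^ k) \<le> ennreal (t ^ k) + ennreal c * (\<Sum>A\<in>?AN. g A \<omega>)" for \<omega>
        proof -
          have "greedy_animal X n \<omega> \<in> (\<lambda>A. \<Sum>j\<in>A. X j \<omega>) ` ?AN"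
            unfolding greedy_animal_def using finAN False by (intro Max_in) auto
          then obtain A0 where A0: "A0 \<in> ?AN" "greedy_animal X n \<omega> = (\<Sum>j\<in>A0. X j \<omega>)" by auto
          define N where "N = real (greedy_animal X n \<omega>)"
          have N0: "N \<ge> 0" unfolding N_def by simp
          have "exp (2 * N) = (\<Prod>j\<in>A0. exp (2 * real (X j \<omega>)))"
            using A0(1) unfolding N_def A0(2) by (simp add: sum_distrib_left exp_sum lattice_animals_def)
          then have "ennreal (exp (2 * N)) = g A0 \<omega>"
            unfolding g_def by (simp add: prod_ennreal)
          also have "\<dots> \<le> (\<Sum>A\<in>?AN. g A \<omega>)"
            by (rule member_le_sum[OF A0(1) _ finAN]) simp
          finally have ge: "ennreal (exp (2 * N)) \<le> (\<Sum>A\<in>?AN. g A \<omega>)" .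
          have "ennreal (N ^ k) \<le> ennreal (t ^ k + c * exp (2 * N))"
            unfolding c_def by (rule ennreal_leI) (rule pointwise_real[OF N0 t0])
          also have "\<dots> = ennreal (t ^ k) + ennreal c * ennreal (exp (2 * N))"
            using t0 by (simp add: c_def ennreal_plus ennreal_mult)
          also have "\<dots> \<le> ennreal (t ^ k) + ennreal c * (\<Sum>A\<in>?AN. g A \<omega>)"
            by (intro add_left_mono mult_left_mono ge) simp
          finally show ?thesis unfolding N_def .
        qed
        have "(\<integral>\<^sup>+ \<omega>. ennreal (real (greedy_animal X n \<omega>) ^ k) \<partial>M)
            \<le> (\<integral>\<^sup>+ \<omega>. ennreal (t ^ k) + ennreal c * (\<Sum>A\<in>?AN. g A \<omega>) \<partial>M)"
          by (rule nn_integral_mono) (rule pw)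
        also have "\<dots> = ennreal (t ^ k) + ennreal c * (\<Sum>A\<in>?AN. \<integral>\<^sup>+\<omega>. g A \<omega> \<partial>M)"
          by (simp add: nn_integral_add nn_integral_cmult nn_integral_sum P.emeasure_space_1)
        also have "(\<Sum>A\<in>?AN. \<integral>\<^sup>+\<omega>. g A \<omega> \<partial>M) = (\<Sum>A\<in>?AN. ennreal (q ^ n))"
          using q1 by (intro sum.cong refl) (auto simp: intA lattice_animals_def ennreal_power)
        also have "\<dots> = ennreal (real (card ?AN) * q ^ n)"
          using q1 by (simp add: ennreal_mult ennreal_of_nat_eq_real_of_nat)
        also have "ennreal (t ^ k) + ennreal c * ennreal (real (card ?AN) * q ^ n)
            = ennreal (t ^ k + c * (real (card ?AN) * q ^ n))"
          using t0 q1 by (simp add: c_def ennreal_plus ennreal_mult)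
        also have "\<dots> \<le> ennreal (C * real n ^ k)"
        proof (rule ennreal_leI)
          have "c * (real (card ?AN) * q ^ n) \<le> c * (16 ^ n * q ^ n)"
            using cardAN q1 unfolding c_def
            by (intro mult_left_mono mult_right_mono) (auto simp del: of_nat_power simp: of_nat_power[symmetric])
          also have "\<dots> = fact k"
          proof -
            have "exp t = (16 * q) ^ n" unfolding t_def
              by (metis exp_of_nat_mult expT mult.commute)
            then show ?thesis unfolding c_def using q1
              by (simp add: exp_minus power_mult_distrib field_simps)
          qed
          finally have h1: "c * (real (card ?AN) * q ^ n) \<le> fact k" .
          have "t ^ k = T ^ k * real n ^ k" unfolding t_def by (simp add: power_mult_distrib)
          moreover have "fact k \<le> fact k * real n ^ k"
            using nk mult_left_mono[of 1 "real n ^ k" "fact k"] by simp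
          moreover have "0 \<le> u ^ k * real n ^ k" unfolding u_def by simp
          moreover have "C * real n ^ k = T ^ k * real n ^ k + fact k * real n ^ k + u ^ k * real n ^ k"
            unfolding C_def by (simp add: distrib_right)
          ultimately show "t ^ k + c * (real (card ?AN) * q ^ n) \<le> C * real n ^ k"
            using h1 by linarith
        qed
        finally show ?thesis .
      qed
    qed
  qed
qed

end
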